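(* Let $K$ be a compact metric space and $f:K\to\mathbb{C}$ a bounded function. Then $f\in D(K)$ if and only if $\mathrm{osc}_\alpha f$ is a bounded function for every countable ordinal $\alpha<\omega_1$. When this occurs, there is a countable ordinal $\alpha$ with $\mathrm{osc}_\alpha f=\mathrm{osc}_{\alpha+1}f$. If moreover $f$ is real valued, then setting $\lambda=\||f|+\mathrm{osc}_\alpha f\|_\infty$ we have $\|f\|_D=\lambda$, and the functions $u=(\lambda-\mathrm{osc}_\alpha f+f)/2$ and $v=(\lambda-\mathrm{osc}_\alpha f-f)/2$ are non-negative lower semi-continuous functions with $f=u-v$ and $\|f\|_D=\|u+v\|_\infty$.
   Context: $C(K)$ denotes the continuous complex functions on $K$. $D(K)$ is the set of $f:K\to\mathbb{C}$ such that $f=\sum_j\varphi_j$ pointwise for some sequence $(\varphi_j)$ in $C(K)$ with $\sup_{k\in K}\sum_j|\varphi_j(k)|<\infty$ (equivalently, $f$ is a complex combination of differences of bounded lower semi-continuous functions), normed by $\|f\|_D=\inf\{\sup_{k\in K}\sum_j|\varphi_j(k)| : (\varphi_j)\subset C(K),\ \sum_j\varphi_j=f\}$. For $g:K\to[-\infty,\infty]$, $Ug(x)=\limsup_{y\to x}g(y)$, where limsups are non-exclusive: $\limsup_{y\to x}g(y)=\inf_U\sup g(U)$ over open neighborhoods $U$ of $x$. Transfinite oscillations of $f:K\to\mathbb{C}$: $\mathrm{osc}_0f\equiv0$; if $\beta=\alpha+1$, $\widetilde{\mathrm{osc}}_\beta f(x)=\limsup_{y\to x}(|f(y)-f(x)|+\mathrm{osc}_\alpha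 f(y))$; if $\beta$ is a limit ordinal, $\widetilde{\mathrm{osc}}_\beta f=\sup_{\alpha<\beta}\mathrm{osc}_\alpha f$; and $\mathrm{osc}_\beta f=U\widetilde{\mathrm{osc}}_\beta f$. *)

theory Defs
  imports "HOL-Analysis.Analysis" "HOL-Library.Extended_Nonnegative_Real"
begin

text \<open>Its field elements are the
  countable ordinals, each element standing for the order type of its initial segment.\<close>
definition omega1 :: "nat set rel" where
  "omega1 = cardSuc natLeq"

definition ord_less :: "nat set rel" where
  "ord_less = omega1 - Id"

definition is_succ_ord :: "nat set \<Rightarrow> nat set \<Rightarrow> bool" where
  "is_succ_ord \<alpha> \<beta> \<longleftrightarrow> (\<alpha>, \<beta>) \<in> ord_less \<and> (\<forall>\<gamma>. (\<alpha>, \<gamma>) \<in> ord_less \<longrightarrow> (\<beta>, \<gamma>) \<in> omega1)"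

text \<open>Non-exclusive limsup relative to K: inf over open neighbourhoods V of x of sup g (V \<inter> K).\<close>
definition lsup :: "'a::metric_space set \<Rightarrow> ('a \<Rightarrow> ennreal) \<Rightarrow> 'a \<Rightarrow> ennreal" where
  "lsup K g x = (INF V \<in> {V. open V \<and> x \<in> V}. SUP y \<in> V \<inter> K. g y)"

definition osc_step :: "'a::metric_space set \<Rightarrow> ('a \<Rightarrow> complex)
    \<Rightarrow> (nat set \<Rightarrow> 'a \<Rightarrow> ennreal) \<Rightarrow> nat set \<Rightarrow> 'a \<Rightarrow> ennreal" where
  "osc_step K f h i =
     (let P = {j. (j, i) \<in> ord_less} in
      if P = {} then (\<lambda>x. 0)
      else if (\<exists>j\<in>P. \<forall>k\<in>P. (k, j) \<in> omega1) then
        (let j = (THE j. j \<in> P \<and> (\<forall>k\<in>P. (k, j) \<in> omega1)) in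
         lsup K (\<lambda>x. lsup K (\<lambda>y. ennreal (norm (f y - f x)) + h j y) x))
      else lsup K (\<lambda>x. SUP j\<in>P. h j x))"

definition osc :: "'a::metric_space set \<Rightarrow> ('a \<Rightarrow> complex) \<Rightarrow> nat set \<Rightarrow> 'a \<Rightarrow> ennreal" where
  "osc K f = wfrec ord_less (osc_step K f)"

definition D_rep :: "'a::metric_space set \<Rightarrow> ('a \<Rightarrow> complex) \<Rightarrow> (nat \<Rightarrow> 'a \<Rightarrow> complex) \<Rightarrow> bool" where
  "D_rep K f \<phi> \<longleftrightarrow> (\<forall>j. continuous_on K (\<phi> j)) \<and> (\<forall>x\<in>K. (\<lambda>j. \<phi> j x) sums f x)
     \<and> (SUP x\<in>K. \<Sum>j. ennreal (norm (\<phi> j x))) < \<infinity>"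

definition in_D :: "'a::metric_space set \<Rightarrow> ('a \<Rightarrow> complex) \<Rightarrow> bool" where
  "in_D K f \<longleftrightarrow> (\<exists>\<phi>. D_rep K f \<phi>)"

definition D_norm :: "'a::metric_space set \<Rightarrow> ('a \<Rightarrow> complex) \<Rightarrow> ennreal" where
  "D_norm K f = (INF \<phi> \<in> {\<phi>. D_rep K f \<phi>}. SUP x\<in>K. \<Sum>j. ennreal (norm (\<phi> j x)))"

definition lsc_on :: "'a::metric_space set \<Rightarrow> ('a \<Rightarrow> real) \<Rightarrow> bool" where
  "lsc_on K g \<longleftrightarrow> (\<forall>t. openin (top_of_set K) {x\<in>K. t < g x})"

end

theory Submission
  imports Defs
begin


lemma wo_omega1: "Well_order omega1"
  unfolding omega1_def by (rule cardSuc_Well_order[OF natLeq_Card_order])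

lemma co_omega1: "Card_order omega1"
  unfolding omega1_def by (rule cardSuc_Card_order[OF natLeq_Card_order])

lemma wr: "wo_rel omega1" using wo_omega1 by (simp add: wo_rel_def)

lemma wf_ord_less: "wf ord_less"
  unfolding ord_less_def by (rule wo_rel.WF[OF wr])

lemma om_trans: "(a,b) \<in> omega1 \<Longrightarrow> (b,c) \<in> omega1 \<Longrightarrow> (a,c) \<in> omega1"
  using wo_rel.TRANS[OF wr] unfolding trans_def by blast

lemma om_antisym: "(a,b) \<in> omega1 \<Longrightarrow> (b,a) \<in> omega1 \<Longrightarrow> a = b"
  using wo_rel.ANTISYM[OF wr] unfolding antisym_def by blast

lemma om_refl: "a \<in> Field omega1 \<Longrightarrow> (a,a) \<in> omega1"
  using wo_rel.REFL[OF wr] unfolding refl_on_def by blast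

lemma om_total: "a \<in> Field omega1 \<Longrightarrow> b \<in> Field omega1 \<Longrightarrow> (a,b) \<in> omega1 \<or> (b,a) \<in> omega1"
  using wo_rel.TOTALS[OF wr] by blast

lemma om_field: "(a,b) \<in> omega1 \<Longrightarrow> a \<in> Field omega1 \<and> b \<in> Field omega1"
  by (auto simp: Field_def)

lemma ol_iff: "(a,b) \<in> ord_less \<longleftrightarrow> (a,b) \<in> omega1 \<and> a \<noteq> b"
  unfolding ord_less_def by auto

lemma om_infinite: "\<not> finite (Field omega1)"
  unfolding omega1_def using cardSuc_finite[OF natLeq_Card_order] Field_natLeq by simp

context includes cardinal_syntax
begin

lemma my_countable_le_natLeq: "countable A \<longleftrightarrow> |A| \<le>o natLeq"
proof -
  have "countable A \<longleftrightarrow> |A| \<le>o |UNIV::nat set|"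
    unfolding countable_def card_of_ordLeq[symmetric] by auto
  then show ?thesis using card_of_nat ordLeq_ordIso_trans ordIso_symmetric by blast
qed

lemma om_uncountable: "\<not> countable (Field omega1)"
proof
  assume "countable (Field omega1)"
  then have "|Field omega1| \<le>o natLeq" by (simp add: my_countable_le_natLeq)
  moreover have "|Field omega1| =o omega1" using card_of_Field_ordIso[OF co_omega1] .
  ultimately have "omega1 \<le>o natLeq" using ordIso_symmetric ordIso_ordLeq_trans by blast
  moreover have "natLeq <o omega1" unfolding omega1_def by (rule cardSuc_greater[OF natLeq_Card_order])
  ultimately show False using not_ordLess_ordLeq by blast
qed

end

lemma om_bigger: "a \<in> Field omega1 \<Longrightarrow> \<exists>b. (a,b) \<in> ord_less"
  using infinite_Card_order_limit[OF co_omega1 om_infinite] ol_iff by blast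

lemma om_least: "A \<subseteq> Field omega1 \<Longrightarrow> A \<noteq> {} \<Longrightarrow> \<exists>a\<in>A. \<forall>a'\<in>A. (a,a') \<in> omega1"
  using Linear_order_wf_diff_Id[of omega1] wo_omega1 unfolding well_order_on_def by blast

lemma succ_exists: "a \<in> Field omega1 \<Longrightarrow> \<exists>b. is_succ_ord a b"
proof -
  assume a: "a \<in> Field omega1"
  let ?A = "{b. (a,b) \<in> ord_less}"
  have "?A \<subseteq> Field omega1" using om_field ol_iff by blast
  moreover have "?A \<noteq> {}" using om_bigger[OF a] by blast
  ultimately obtain b where "b \<in> ?A" "\<forall>c\<in>?A. (b,c) \<in> omega1" using om_least by meson
  then show ?thesis unfolding is_succ_ord_def by blast
qed

lemma succ_field: "is_succ_ord a b \<Longrightarrow> a \<in> Field omega1 \<and> b \<in> Field omega1"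
  unfolding is_succ_ord_def using om_field ol_iff by blast

lemma succ_pred: "is_succ_ord a b \<Longrightarrow> (j,b) \<in> ord_less \<Longrightarrow> (j,a) \<in> omega1"
proof -
  assume s: "is_succ_ord a b" and j: "(j,b) \<in> ord_less"
  have af: "a \<in> Field omega1" using s unfolding is_succ_ord_def ol_iff using om_field by blast
  have jf: "j \<in> Field omega1" using j unfolding ol_iff using om_field by blast
  show "(j,a) \<in> omega1"
  proof (rule ccontr)
    assume n: "(j,a) \<notin> omega1"
    then have "(a,j) \<in> omega1" "a \<noteq> j" using om_total[OF af jf] om_refl[OF af] by auto
    then have "(b,j) \<in> omega1" using s unfolding is_succ_ord_def ol_iff by blast
    then show False using j om_antisym unfolding ol_iff by blast
  qed
qed

lemma osc_step_max: assumes "m \<in> {j. (j, i) \<in> ord_less}" "\<forall>k\<in>{j. (j, i) \<in> ord_less}. (k, m) \<in> omega1"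
  shows "osc_step K f h i = lsup K (\<lambda>x. lsup K (\<lambda>y. ennreal (norm (f y - f x)) + h m y) x)"
proof -
  let ?P = "{j. (j, i) \<in> ord_less}"
  have t: "(THE j. j \<in> ?P \<and> (\<forall>k\<in>?P. (k, j) \<in> omega1)) = m"
  proof (rule the_equality)
    show "m \<in> ?P \<and> (\<forall>k\<in>?P. (k, m) \<in> omega1)" using assms by blast
    fix j assume "j \<in> ?P \<and> (\<forall>k\<in>?P. (k, j) \<in> omega1)"
    then have "(j,m) \<in> omega1" "(m,j) \<in> omega1" using assms by auto
    then show "j = m" by (rule om_antisym)
  qed
  have ne: "?P \<noteq> {}" using assms by blast
  have ex: "\<exists>j\<in>?P. \<forall>k\<in>?P. (k, j) \<in> omega1" using assms by blast
  show ?thesis unfolding osc_step_def Let_def by (simp only: if_not_P[OF ne] if_P[OF ex] t)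
qed

lemma osc_step_lim: assumes "{j. (j, i) \<in> ord_less} \<noteq> {}" "\<not> (\<exists>j\<in>{j. (j, i) \<in> ord_less}. \<forall>k\<in>{j. (j, i) \<in> ord_less}. (k, j) \<in> omega1)"
  shows "osc_step K f h i = lsup K (\<lambda>x. SUP j\<in>{j. (j, i) \<in> ord_less}. h j x)"
  unfolding osc_step_def Let_def by (simp only: if_not_P[OF assms(1)] if_not_P[OF assms(2)])

lemma osc_step_zero: assumes "{j. (j, i) \<in> ord_less} = {}"
  shows "osc_step K f h i = (\<lambda>x. 0)"
  unfolding osc_step_def Let_def by (simp only: if_P[OF assms])

lemma osc_step_cong:
  assumes "\<And>j. (j,i) \<in> ord_less \<Longrightarrow> h j = h' j"
  shows "osc_step K f h i = osc_step K f h' i"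
proof -
  let ?P = "{j. (j, i) \<in> ord_less}"
  show ?thesis
  proof (cases "?P = {}")
    case True then show ?thesis by (simp add: osc_step_zero)
  next
    case False
    show ?thesis
    proof (cases "\<exists>j\<in>?P. \<forall>k\<in>?P. (k, j) \<in> omega1")
      case True
      then obtain m where "m \<in> ?P" "\<forall>k\<in>?P. (k, m) \<in> omega1" by blast
      note m = this
      have "h m = h' m" using assms m by blast
      then show ?thesis unfolding osc_step_max[OF m] by simp
    next
      case nt: False
      have "(\<lambda>x. SUP j\<in>?P. h j x) = (\<lambda>x. SUP j\<in>?P. h' j x)" using assms by auto
      then show ?thesis unfolding osc_step_lim[OF False nt] by simp
    qed
  qed
qed

lemma osc_eq: "osc K f i = osc_step K f (osc K f) i"
proof -
  have "osc K f i = osc_step K f (cut (osc K f) ord_less i) i"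
    unfolding osc_def by (rule wfrec[OF wf_ord_less])
  also have "\<dots> = osc_step K f (osc K f) i"
    by (rule osc_step_cong) (simp add: cut_apply)
  finally show ?thesis .
qed

lemma osc_zero: assumes "{j. (j, i) \<in> ord_less} = {}" shows "osc K f i = (\<lambda>x. 0)"
  unfolding osc_eq[of K f i] by (rule osc_step_zero[OF assms])

lemma osc_max: assumes "m \<in> {j. (j, i) \<in> ord_less}" "\<forall>k\<in>{j. (j, i) \<in> ord_less}. (k, m) \<in> omega1"
  shows "osc K f i = lsup K (\<lambda>x. lsup K (\<lambda>y. ennreal (norm (f y - f x)) + osc K f m y) x)"
  unfolding osc_eq[of K f i] by (rule osc_step_max[OF assms])

lemma osc_limit: assumes "{j. (j, i) \<in> ord_less} \<noteq> {}" "\<not> (\<exists>j\<in>{j. (j, i) \<in> ord_less}. \<forall>k\<in>{j. (j, i) \<in> ord_less}. (k, j) \<in> omega1)"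
  shows "osc K f i = lsup K (\<lambda>x. SUP j\<in>{j. (j, i) \<in> ord_less}. osc K f j x)"
  unfolding osc_eq[of K f i] by (rule osc_step_lim[OF assms])

lemma osc_succ: assumes "is_succ_ord a b"
  shows "osc K f b = lsup K (\<lambda>x. lsup K (\<lambda>y. ennreal (norm (f y - f x)) + osc K f a y) x)"
proof (rule osc_max)
  show "a \<in> {j. (j, b) \<in> ord_less}" using assms unfolding is_succ_ord_def by blast
  show "\<forall>k\<in>{j. (j, b) \<in> ord_less}. (k, a) \<in> omega1" using succ_pred[OF assms] by blast
qed


lemma lsup_ge: "x \<in> K \<Longrightarrow> g x \<le> lsup K g x"
  unfolding lsup_def by (rule INF_greatest) (auto intro: SUP_upper)

lemma lsup_le_SUP: "open V \<Longrightarrow> x \<in> V \<Longrightarrow> lsup K g x \<le> (SUP y\<in>V \<inter> K. g y)"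
  unfolding lsup_def by (rule INF_lower) auto

lemma lsup_le_bound:
  assumes "\<And>y. y \<in> V \<Longrightarrow> y \<in> K \<Longrightarrow> g y \<le> c" "open V" "x \<in> V"
  shows "lsup K g x \<le> c"
proof -
  have "(SUP y\<in>V \<inter> K. g y) \<le> c" using assms(1) by (intro SUP_least) auto
  then show ?thesis using lsup_le_SUP[OF assms(2,3), of K g] by simp
qed

lemma lsup_le_eps:
  assumes "\<And>e. e > 0 \<Longrightarrow> \<exists>V. open V \<and> x \<in> V \<and> (\<forall>y\<in>V \<inter> K. g y \<le> ennreal (c + e))"
    and "c \<ge> 0"
  shows "lsup K g x \<le> ennreal c"
proof (rule ennreal_le_epsilon)
  fix e :: real assume e: "0 < e"
  obtain V where V: "open V" "x \<in> V" "\<forall>y\<in>V \<inter> K. g y \<le> ennreal (c + e)" using assms(1)[OF e] by blast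
  have "lsup K g x \<le> ennreal (c + e)" by (rule lsup_le_bound[OF _ V(1,2)]) (use V(3) in blast)
  also have "\<dots> = ennreal c + ennreal e" using e assms(2) by simp
  finally show "lsup K g x \<le> ennreal c + ennreal e" .
qed

lemma lsup_mono: "(\<And>y. y \<in> K \<Longrightarrow> g y \<le> g' y) \<Longrightarrow> lsup K g x \<le> lsup K g' x"
  unfolding lsup_def by (intro INF_mono) (auto intro!: SUP_mono)

lemma lsup_usc:
  assumes "lsup K g x < t"
  shows "\<exists>V. open V \<and> x \<in> V \<and> (\<forall>y\<in>V. lsup K g y < t)"
proof -
  obtain V where V: "V \<in> {V. open V \<and> x \<in> V}" "(SUP y\<in>V \<inter> K. g y) < t"
    using assms unfolding lsup_def INF_less_iff by blast
  have "\<forall>y\<in>V. lsup K g y < t"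
    using V lsup_le_SUP[of V _ K g] by (auto intro: le_less_trans)
  then show ?thesis using V(1) by blast
qed

lemma osc_mono_less:
  "(j,i) \<in> ord_less \<Longrightarrow> x \<in> K \<Longrightarrow> osc K f j x \<le> osc K f i x"
proof (induction i arbitrary: j x rule: wf_induct_rule[OF wf_ord_less])
  case (1 i)
  let ?P = "{j. (j, i) \<in> ord_less}"
  have jP: "j \<in> ?P" using 1 by blast
  show ?case
  proof (cases "\<exists>m\<in>?P. \<forall>k\<in>?P. (k, m) \<in> omega1")
    case True
    then obtain m where m: "m \<in> ?P" "\<forall>k\<in>?P. (k, m) \<in> omega1" by blast
    have jm: "osc K f j x \<le> osc K f m x"
    proof (cases "j = m")
      case False
      then have "(j,m) \<in> ord_less" using m jP ol_iff by blast
      then show ?thesis using 1 m by blast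
    qed simp
    have "osc K f m x = ennreal (norm (f x - f x)) + osc K f m x" by simp
    also have "\<dots> \<le> lsup K (\<lambda>y. ennreal (norm (f y - f x)) + osc K f m y) x"
      by (rule lsup_ge[OF 1(3)])
    also have "\<dots> \<le> lsup K (\<lambda>x. lsup K (\<lambda>y. ennreal (norm (f y - f x)) + osc K f m y) x) x"
      by (rule lsup_ge[OF 1(3)])
    also have "\<dots> = osc K f i x" using osc_max[OF m, of K f] by simp
    finally show ?thesis using jm by simp
  next
    case False
    have ne: "?P \<noteq> {}" using jP by blast
    have "osc K f j x \<le> (SUP j\<in>?P. osc K f j x)" using jP by (rule SUP_upper)
    also have "\<dots> \<le> lsup K (\<lambda>x. SUP j\<in>?P. osc K f j x) x" by (rule lsup_ge[OF 1(3)])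
    also have "\<dots> = osc K f i x" using osc_limit[OF ne False, of K f] by simp
    finally show ?thesis .
  qed
qed

lemma osc_mono: "(j,i) \<in> omega1 \<Longrightarrow> x \<in> K \<Longrightarrow> osc K f j x \<le> osc K f i x"
  by (cases "j = i") (auto simp: ol_iff intro: osc_mono_less)

lemma osc_usc:
  assumes "x \<in> K" "osc K f i x < t"
  shows "\<exists>V. open V \<and> x \<in> V \<and> (\<forall>y\<in>V. osc K f i y < t)"
proof -
  let ?P = "{j. (j, i) \<in> ord_less}"
  show ?thesis
  proof (cases "?P = {}")
    case True
    then show ?thesis using assms osc_zero[OF True, of K f] by (intro exI[of _ UNIV]) auto
  next
    case ne: False
    show ?thesis
    proof (cases "\<exists>m\<in>?P. \<forall>k\<in>?P. (k, m) \<in> omega1")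
      case True
      then obtain m where m: "m \<in> ?P" "\<forall>k\<in>?P. (k, m) \<in> omega1" by blast
      have "osc K f i = lsup K (\<lambda>x. lsup K (\<lambda>y. ennreal (norm (f y - f x)) + osc K f m y) x)"
        by (rule osc_max[OF m])
      then show ?thesis using assms(2) lsup_usc by simp
    next
      case False
      have "osc K f i = lsup K (\<lambda>x. SUP j\<in>?P. osc K f j x)"
        by (rule osc_limit[OF ne False])
      then show ?thesis using assms(2) lsup_usc by simp
    qed
  qed
qed


lemma lsc_series:
  fixes u :: "'a::metric_space \<Rightarrow> real"
  assumes nn: "\<And>x. x \<in> K \<Longrightarrow> 0 \<le> u x" and bd: "\<And>x. x \<in> K \<Longrightarrow> u x \<le> B"
    and lsc: "\<And>x e. x \<in> K \<Longrightarrow> e > 0 \<Longrightarrow> \<exists>d>0. \<forall>y\<in>K. dist y x < d \<longrightarrow> u x - e < u y"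
  shows "\<exists>\<psi>. (\<forall>n. continuous_on K (\<psi> n)) \<and> (\<forall>n. \<forall>x\<in>K. 0 \<le> \<psi> n x) \<and> (\<forall>x\<in>K. (\<lambda>n. \<psi> n x) sums u x)"
proof (cases "K = {}")
  case True
  then show ?thesis by (intro exI[of _ "\<lambda>n x. 0"]) auto
next
  case ne: False
  define g where "g n x = (INF y\<in>K. u y + real n * dist x y)" for n x
  have bdd: "bdd_below ((\<lambda>y. u y + real n * dist x y) ` K)" for n x
  proof (rule bdd_belowI2[of _ 0])
    fix y assume "y \<in> K" then show "0 \<le> u y + real n * dist x y" using nn by simp
  qed
  have g_nn: "0 \<le> g n x" for n x
    unfolding g_def using ne nn by (intro cINF_greatest) auto
  have g_le: "g n x \<le> u y + real n * dist x y" if "y \<in> K" for n x y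
    unfolding g_def by (rule cINF_lower[OF bdd that])
  have g_le_u: "g n x \<le> u x" if "x \<in> K" for n x
    using g_le[OF that, of n x] by simp
  have g_mono: "g n x \<le> g (Suc n) x" for n x
    unfolding g_def
  proof (rule cINF_greatest[OF ne])
    fix y assume y: "y \<in> K"
    have "(INF y\<in>K. u y + real n * dist x y) \<le> u y + real n * dist x y" by (rule cINF_lower[OF bdd y])
    also have "\<dots> \<le> u y + real (Suc n) * dist x y" by (simp add: distrib_right)
    finally show "(INF y\<in>K. u y + real n * dist x y) \<le> u y + real (Suc n) * dist x y" .
  qed
  have g_lip: "g n x \<le> g n x' + real n * dist x x'" for n x x'
  proof -
    have "g n x - real n * dist x x' \<le> g n x'"
      unfolding g_def[of n x']
    proof (rule cINF_greatest[OF ne])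
      fix y assume y: "y \<in> K"
      have "g n x \<le> u y + real n * dist x y" by (rule g_le[OF y])
      also have "\<dots> \<le> u y + real n * (dist x x' + dist x' y)"
        by (intro add_left_mono mult_left_mono dist_triangle) auto
      finally show "g n x - real n * dist x x' \<le> u y + real n * dist x' y" by (simp add: distrib_left)
    qed
    then show ?thesis by simp
  qed
  have g_cont: "continuous_on K (g n)" for n
    unfolding continuous_on_iff
  proof (intro ballI allI impI)
    fix x e assume x: "x \<in> K" and e: "(e::real) > 0"
    show "\<exists>d>0. \<forall>x'\<in>K. dist x' x < d \<longrightarrow> dist (g n x') (g n x) < e"
    proof (intro exI[of _ "e / (real n + 1)"] conjI ballI impI)
      show "0 < e / (real n + 1)" using e by simp
      fix x' assume "x' \<in> K" "dist x' x < e / (real n + 1)"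
      then have d: "dist x' x * (real n + 1) < e" by (simp add: field_simps)
      have "real n * dist x' x \<le> dist x' x * (real n + 1)" by (simp add: algebra_simps)
      then have "real n * dist x' x < e" using d by linarith
      moreover have "g n x' \<le> g n x + real n * dist x' x" using g_lip[of n x' x] .
      moreover have "g n x \<le> g n x' + real n * dist x' x" using g_lip[of n x x'] by (simp add: dist_commute)
      ultimately show "dist (g n x') (g n x) < e" by (simp add: dist_real_def abs_if)
    qed
  qed
  have g_lim: "\<exists>N. \<forall>n\<ge>N. u x - e \<le> g n x" if x: "x \<in> K" and e: "e > 0" for x e
  proof -
    obtain d where d: "d > 0" "\<forall>y\<in>K. dist y x < d \<longrightarrow> u x - e < u y" using lsc[OF x e] by blast
    obtain N where N: "B / d < real N" using reals_Archimedean2 by blast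
    have "u x - e \<le> g n x" if n: "n \<ge> N" for n
      unfolding g_def
    proof (rule cINF_greatest[OF ne])
      fix y assume y: "y \<in> K"
      show "u x - e \<le> u y + real n * dist x y"
      proof (cases "dist y x < d")
        case True
        then show ?thesis using d(2) y by (smt (verit) dist_commute mult_nonneg_nonneg of_nat_0_le_iff zero_le_dist)
      next
        case False
        have "B < real N * d" using N d(1) by (simp add: field_simps)
        also have "\<dots> \<le> real n * d" using n d(1) by (simp add: mult_right_mono)
        also have "\<dots> \<le> real n * dist x y" using False by (simp add: dist_commute mult_left_mono)
        finally show ?thesis using bd[OF x] nn[OF y] e by linarith
      qed
    qed
    then show ?thesis by blast
  qed
  define G where "G n x = (if n = 0 then 0 else g (n - 1) x)" for n x
  define \<psi> where "\<psi> n x = G (Suc n) x - G n x" for n x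
  have G_lim: "(\<lambda>n. G n x) \<longlonglongrightarrow> u x" if x: "x \<in> K" for x
  proof (rule LIMSEQ_I)
    fix r :: real assume r: "0 < r"
    obtain N where N: "\<forall>n\<ge>N. u x - r/2 \<le> g n x" using g_lim[OF x, of "r/2"] r by auto
    have "norm (G n x - u x) < r" if "n \<ge> Suc N" for n
    proof -
      have "G n x = g (n - 1) x" using that unfolding G_def by simp
      moreover have "u x - r/2 \<le> g (n - 1) x" using N that by simp
      moreover have "g (n - 1) x \<le> u x" using g_le_u[OF x] .
      ultimately show ?thesis using r by simp
    qed
    then show "\<exists>no. \<forall>n\<ge>no. norm (G n x - u x) < r" by blast
  qed
  show ?thesis
  proof (intro exI[of _ \<psi>] conjI allI ballI)
    fix n
    show "continuous_on K (\<psi> n)"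
    proof (cases n)
      case 0 then show ?thesis unfolding \<psi>_def[abs_def] G_def using g_cont by simp
    next
      case (Suc m) then show ?thesis unfolding \<psi>_def[abs_def] G_def using g_cont
        by (simp add: continuous_on_diff)
    qed
  next
    fix n x assume "x \<in> K"
    show "0 \<le> \<psi> n x"
      by (cases n) (auto simp: \<psi>_def G_def g_nn g_mono)
  next
    fix x assume x: "x \<in> K"
    have "(\<lambda>n. \<psi> n x) sums (u x - G 0 x)" unfolding \<psi>_def by (rule telescope_sums[OF G_lim[OF x]])
    then show "(\<lambda>n. \<psi> n x) sums u x" by (simp add: G_def)
  qed
qed


locale drep =
  fixes K :: "'a::metric_space set" and f :: "'a \<Rightarrow> complex" and \<phi> :: "nat \<Rightarrow> 'a \<Rightarrow> complex"
  assumes rep: "D_rep K f \<phi>"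
    and fin: "(SUP x\<in>K. \<Sum>j. ennreal (norm (\<phi> j x))) < \<infinity>"
begin

definition "M = (SUP x\<in>K. \<Sum>j. ennreal (norm (\<phi> j x)))"
definition "Mr = enn2real M"
definition "W x = (\<Sum>j. norm (\<phi> j x))"

lemma cont: "continuous_on K (\<phi> j)" using rep unfolding D_rep_def by blast
lemma sums_f: "x \<in> K \<Longrightarrow> (\<lambda>j. \<phi> j x) sums f x" using rep unfolding D_rep_def by blast

lemma Mfin: "M < \<infinity>" using fin unfolding M_def .

lemma le_M: "x \<in> K \<Longrightarrow> (\<Sum>j. ennreal (norm (\<phi> j x))) \<le> M"
  unfolding M_def by (rule SUP_upper)

lemma summ: "x \<in> K \<Longrightarrow> summable (\<lambda>j. norm (\<phi> j x))"
proof -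
  assume x: "x \<in> K"
  have "(\<Sum>j. ennreal (norm (\<phi> j x))) \<noteq> top" using le_M[OF x] Mfin
    by (metis infinity_ennreal_def le_less_trans less_irrefl)
  then show ?thesis by (intro summable_suminf_not_top) auto
qed

lemma W_enn: "x \<in> K \<Longrightarrow> (\<Sum>j. ennreal (norm (\<phi> j x))) = ennreal (W x)"
  unfolding W_def using summ by (intro suminf_ennreal2) auto

lemma W_nonneg: "x \<in> K \<Longrightarrow> 0 \<le> W x" unfolding W_def
  by (rule suminf_nonneg[OF summ]) auto

lemma M_eq: "M = ennreal Mr"
  unfolding Mr_def using Mfin by (cases M) auto

lemma W_le: "x \<in> K \<Longrightarrow> W x \<le> Mr"
proof -
  assume x: "x \<in> K"
  have "ennreal (W x) \<le> ennreal Mr" using le_M[OF x] W_enn[OF x] M_eq by simp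
  moreover have "0 \<le> Mr" unfolding Mr_def by simp
  ultimately show ?thesis using ennreal_le_iff by blast
qed

lemma norm_f_le: "x \<in> K \<Longrightarrow> norm (f x) \<le> W x"
proof -
  assume x: "x \<in> K"
  have "f x = (\<Sum>j. \<phi> j x)" using sums_f[OF x] by (simp add: sums_iff)
  then show ?thesis unfolding W_def using summable_norm[OF summ[OF x]] by simp
qed

definition "A N x = (\<Sum>j<N. norm (\<phi> j x))"
definition "S N x = (\<Sum>j<N. \<phi> j x)"

lemma tail: "y \<in> K \<Longrightarrow> norm (f y - S N y) \<le> W y - A N y"
proof -
  assume y: "y \<in> K"
  have s1: "summable (\<lambda>j. \<phi> j y)" using summable_norm_cancel[OF summ[OF y]] .
  have "f y = (\<Sum>j. \<phi> j y)" using sums_f[OF y] by (simp add: sums_iff)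
  also have "\<dots> = (\<Sum>n. \<phi> (n + N) y) + S N y"
    unfolding S_def by (rule suminf_split_initial_segment[OF s1])
  finally have e1: "f y - S N y = (\<Sum>n. \<phi> (n + N) y)" by simp
  have "W y = (\<Sum>n. norm (\<phi> (n + N) y)) + A N y"
    unfolding W_def A_def by (rule suminf_split_initial_segment[OF summ[OF y]])
  moreover have "norm (\<Sum>n. \<phi> (n + N) y) \<le> (\<Sum>n. norm (\<phi> (n + N) y))"
    by (rule summable_norm) (rule summable_ignore_initial_segment[OF summ[OF y]])
  ultimately show ?thesis using e1 by simp
qed

lemma A_le_W: "y \<in> K \<Longrightarrow> A N y \<le> W y"
  unfolding A_def W_def using summ by (intro sum_le_suminf) auto

lemma A_lim: "x \<in> K \<Longrightarrow> (\<lambda>N. A N x) \<longlonglongrightarrow> W x"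
  unfolding A_def W_def using summ by (intro summable_LIMSEQ) auto

lemma A_cont: "continuous_on K (A N)"
  unfolding A_def[abs_def] by (intro continuous_intros cont)

lemma S_cont: "continuous_on K (S N)"
  unfolding S_def[abs_def] by (intro continuous_intros cont)

lemma near: "open (ball x d)" "d > 0 \<Longrightarrow> x \<in> ball x d" by auto

lemma key:
  assumes x: "x \<in> K" and e: "e > 0"
  shows "\<exists>V. open V \<and> x \<in> V \<and> (\<forall>y\<in>V \<inter> K. norm (f y - f x) \<le> W y - W x + e)"
proof -
  have e4: "e/4 > 0" using e by simp
  obtain N0 where N0: "\<forall>n\<ge>N0. norm (A n x - W x) < e/4"
    using LIMSEQ_D[OF A_lim[OF x] e4] by blast
  define N where "N = N0"
  have "norm (A N x - W x) < e/4" using N0 unfolding N_def by blast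
  then have N: "W x - A N x < e/4" by (simp add: abs_if split: if_splits)
  obtain d1 where d1: "d1 > 0" "\<forall>y\<in>K. dist y x < d1 \<longrightarrow> dist (A N y) (A N x) < e/4"
    using A_cont[of N] x e4 unfolding continuous_on_iff by blast
  obtain d2 where d2: "d2 > 0" "\<forall>y\<in>K. dist y x < d2 \<longrightarrow> dist (S N y) (S N x) < e/4"
    using S_cont[of N] x e4 unfolding continuous_on_iff by blast
  let ?V = "ball x (min d1 d2)"
  have "\<forall>y\<in>?V \<inter> K. norm (f y - f x) \<le> W y - W x + e"
  proof
    fix y assume y: "y \<in> ?V \<inter> K"
    then have yK: "y \<in> K" and dy: "dist y x < d1" "dist y x < d2" by (auto simp: dist_commute)
    have "dist (A N y) (A N x) < e/4" using d1(2) yK dy(1) by blast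
    then have a: "A N y > A N x - e/4" by (simp add: dist_real_def abs_if split: if_splits)
    have s: "norm (S N y - S N x) < e/4" using d2(2) yK dy(2) by (simp add: dist_norm)
    have eq: "f y - f x = ((S N y - S N x) + (f y - S N y)) - (f x - S N x)" by simp
    have "norm (f y - f x) \<le> norm ((S N y - S N x) + (f y - S N y)) + norm (f x - S N x)"
      unfolding eq by (rule norm_triangle_ineq4)
    also have "\<dots> \<le> norm (S N y - S N x) + norm (f y - S N y) + norm (f x - S N x)"
      using norm_triangle_ineq[of "S N y - S N x" "f y - S N y"] by linarith
    finally have "norm (f y - f x) \<le> norm (S N y - S N x) + norm (f y - S N y) + norm (f x - S N x)" .
    also have "\<dots> \<le> e/4 + (W y - A N y) + (W x - A N x)"
      using s tail[OF yK] tail[OF x] by (intro add_mono) auto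
    finally show "norm (f y - f x) \<le> W y - W x + e" using a N by simp
  qed
  moreover have "open ?V" by simp
  moreover have "x \<in> ?V" using d1(1) d2(1) by simp
  ultimately show ?thesis by blast
qed

lemma W_lsc:
  assumes x: "x \<in> K" and e: "e > 0"
  shows "\<exists>V. open V \<and> x \<in> V \<and> (\<forall>y\<in>V \<inter> K. W x - e \<le> W y)"
proof -
  obtain V where V: "open V" "x \<in> V" "\<forall>y\<in>V \<inter> K. norm (f y - f x) \<le> W y - W x + e"
    using key[OF x e] by blast
  have "\<forall>y\<in>V \<inter> K. W x - e \<le> W y"
  proof
    fix y assume "y \<in> V \<inter> K"
    then have "norm (f y - f x) \<le> W y - W x + e" using V(3) by blast
    moreover have "0 \<le> norm (f y - f x)" by simp
    ultimately show "W x - e \<le> W y" by linarith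
  qed
  then show ?thesis using V(1,2) by blast
qed

lemma outer:
  assumes g: "\<And>y. y \<in> K \<Longrightarrow> g y \<le> ennreal (Mr - W y)" and x: "x \<in> K"
  shows "lsup K g x \<le> ennreal (Mr - W x)"
proof (rule lsup_le_eps)
  show "0 \<le> Mr - W x" using W_le[OF x] by simp
  fix e :: real assume e: "e > 0"
  obtain V where V: "open V" "x \<in> V" "\<forall>y\<in>V \<inter> K. W x - e \<le> W y" using W_lsc[OF x e] by blast
  have "\<forall>y\<in>V \<inter> K. g y \<le> ennreal (Mr - W x + e)"
  proof
    fix y assume y: "y \<in> V \<inter> K"
    have "g y \<le> ennreal (Mr - W y)" using g y by blast
    also have "\<dots> \<le> ennreal (Mr - W x + e)"
    proof (rule ennreal_leI)
      have "W x - e \<le> W y" using V(3) y by blast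
      then show "Mr - W y \<le> Mr - W x + e" by linarith
    qed
    finally show "g y \<le> ennreal (Mr - W x + e)" .
  qed
  then show "\<exists>V. open V \<and> x \<in> V \<and> (\<forall>y\<in>V \<inter> K. g y \<le> ennreal (Mr - W x + e))" using V by blast
qed

lemma inner:
  assumes g: "\<And>y. y \<in> K \<Longrightarrow> g y \<le> ennreal (Mr - W y)" and x: "x \<in> K"
  shows "lsup K (\<lambda>y. ennreal (norm (f y - f x)) + g y) x \<le> ennreal (Mr - W x)"
proof (rule lsup_le_eps)
  show "0 \<le> Mr - W x" using W_le[OF x] by simp
  fix e :: real assume e: "e > 0"
  obtain V where V: "open V" "x \<in> V" "\<forall>y\<in>V \<inter> K. norm (f y - f x) \<le> W y - W x + e"
    using key[OF x e] by blast
  have "\<forall>y\<in>V \<inter> K. ennreal (norm (f y - f x)) + g y \<le> ennreal (Mr - W x + e)"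
  proof
    fix y assume y: "y \<in> V \<inter> K"
    have n: "norm (f y - f x) \<le> W y - W x + e" using V(3) y by blast
    have "ennreal (norm (f y - f x)) + g y \<le> ennreal (W y - W x + e) + ennreal (Mr - W y)"
      using g y n by (intro add_mono ennreal_leI) auto
    also have "\<dots> = ennreal (W y - W x + e + (Mr - W y))"
      using n W_le y by (subst ennreal_plus) (auto intro: order_trans[OF norm_ge_zero])
    also have "\<dots> = ennreal (Mr - W x + e)" by (rule arg_cong[where f=ennreal]) linarith
    finally show "ennreal (norm (f y - f x)) + g y \<le> ennreal (Mr - W x + e)" .
  qed
  then show "\<exists>V. open V \<and> x \<in> V \<and> (\<forall>y\<in>V \<inter> K. ennreal (norm (f y - f x)) + g y \<le> ennreal (Mr - W x + e))"
    using V by blast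
qed

lemma inv: "x \<in> K \<Longrightarrow> osc K f i x \<le> ennreal (Mr - W x)"
proof (induction i arbitrary: x rule: wf_induct_rule[OF wf_ord_less])
  case (1 i)
  let ?P = "{j. (j, i) \<in> ord_less}"
  show ?case
  proof (cases "?P = {}")
    case True
    then show ?thesis using osc_zero[OF True, of K f] by simp
  next
    case ne: False
    show ?thesis
    proof (cases "\<exists>m\<in>?P. \<forall>k\<in>?P. (k, m) \<in> omega1")
      case True
      then obtain m where m: "m \<in> ?P" "\<forall>k\<in>?P. (k, m) \<in> omega1" by blast
      have "lsup K (\<lambda>x. lsup K (\<lambda>y. ennreal (norm (f y - f x)) + osc K f m y) x) x \<le> ennreal (Mr - W x)"
        by (rule outer[OF inner[OF 1(1)] 1(2)]) (use m in auto)
      then show ?thesis using osc_max[OF m, of K f] by simp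
    next
      case False
      have "lsup K (\<lambda>x. SUP j\<in>?P. osc K f j x) x \<le> ennreal (Mr - W x)"
        by (rule outer[OF _ 1(2)]) (use 1(1) in \<open>auto intro: SUP_least\<close>)
      then show ?thesis using osc_limit[OF ne False, of K f] by simp
    qed
  qed
qed

lemma bound: "x \<in> K \<Longrightarrow> ennreal (norm (f x)) + osc K f i x \<le> M"
proof -
  assume x: "x \<in> K"
  have "ennreal (norm (f x)) + osc K f i x \<le> ennreal (W x) + ennreal (Mr - W x)"
    using norm_f_le[OF x] inv[OF x] by (intro add_mono ennreal_leI) auto
  also have "\<dots> = ennreal Mr" using W_le[OF x] W_nonneg[OF x] by (subst ennreal_plus[symmetric]) auto
  finally show ?thesis using M_eq by simp
qed

end

lemma not_less_inf: "\<not> (a::ennreal) < \<infinity> \<Longrightarrow> a = top"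
  unfolding infinity_ennreal_def using top.not_eq_extremum by blast

lemma D_bound:
  assumes "D_rep K f \<phi>" "x \<in> K"
  shows "ennreal (norm (f x)) + osc K f i x \<le> (SUP x\<in>K. \<Sum>j. ennreal (norm (\<phi> j x)))"
proof (cases "(SUP x\<in>K. \<Sum>j. ennreal (norm (\<phi> j x))) < \<infinity>")
  case True
  interpret drep K f \<phi> using assms(1) True by unfold_locales
  show ?thesis using bound[OF assms(2)] unfolding M_def .
next
  case False
  have T: "(SUP x\<in>K. \<Sum>j. ennreal (norm (\<phi> j x))) = top"
    by (rule not_less_inf[OF False])
  show ?thesis unfolding T by (rule top_greatest)
qed


definition sc :: "nat set \<Rightarrow> nat set" where "sc a = (SOME b. is_succ_ord a b)"

lemma sc_succ: "a \<in> Field omega1 \<Longrightarrow> is_succ_ord a (sc a)"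
  unfolding sc_def using succ_exists by (rule someI_ex)

lemma succ_le: "is_succ_ord a b \<Longrightarrow> (a,b) \<in> omega1"
  unfolding is_succ_ord_def ol_iff by blast

lemma succ_min: "is_succ_ord a b \<Longrightarrow> (a,c) \<in> ord_less \<Longrightarrow> (b,c) \<in> omega1"
  unfolding is_succ_ord_def by blast

lemma stabilize:
  assumes K: "compact K"
  shows "\<exists>\<alpha>\<in>Field omega1. \<exists>\<beta>. is_succ_ord \<alpha> \<beta> \<and> (\<forall>x\<in>K. osc K f \<alpha> x = osc K f \<beta> x)"
proof (rule ccontr)
  assume "\<not> ?thesis"
  then have H: "\<forall>a\<in>Field omega1. \<exists>x\<in>K. osc K f a x \<noteq> osc K f (sc a) x"
    using sc_succ by blast
  have "\<forall>n::nat. \<exists>k. finite k \<and> k \<subseteq> K \<and> K \<subseteq> (\<Union>x\<in>k. ball x (1 / real (Suc n)))"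
  proof
    fix n :: nat
    have "1 / real (Suc n) > 0" by simp
    then show "\<exists>k. finite k \<and> k \<subseteq> K \<and> K \<subseteq> (\<Union>x\<in>k. ball x (1 / real (Suc n)))"
      using seq_compact_imp_totally_bounded[OF compact_imp_seq_compact[OF K]] by blast
  qed
  then obtain C where C: "\<forall>n. finite (C n) \<and> C n \<subseteq> K \<and> K \<subseteq> (\<Union>x\<in>C n. ball x (1 / real (Suc n)))"
    using choice[of "\<lambda>n k. finite k \<and> k \<subseteq> K \<and> K \<subseteq> (\<Union>x\<in>k. ball x (1 / real (Suc n)))"] by blast
  define Q where "Q a t = (case t of (r, n, c) \<Rightarrow> c \<in> C n \<and>
      (\<forall>y\<in>ball c (1 / real (Suc n)) \<inter> K. osc K f a y < ennreal (real_of_rat r)) \<and>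
      (\<exists>x\<in>ball c (1 / real (Suc n)) \<inter> K. ennreal (real_of_rat r) < osc K f (sc a) x))" for a and t :: "rat \<times> nat \<times> 'a"
  have ex: "\<exists>t. Q a t" if a: "a \<in> Field omega1" for a
  proof -
    obtain x where x: "x \<in> K" "osc K f a x \<noteq> osc K f (sc a) x" using H a by blast
    have "osc K f a x \<le> osc K f (sc a) x"
      using osc_mono[OF succ_le[OF sc_succ[OF a]] x(1)] .
    then have lt: "osc K f a x < osc K f (sc a) x" using x(2) by simp
    obtain r where r: "osc K f a x < ennreal (real_of_rat r)" "ennreal (real_of_rat r) < osc K f (sc a) x"
      using ennreal_rat_dense[OF lt] by blast
    obtain V where V: "open V" "x \<in> V" "\<forall>y\<in>V. osc K f a y < ennreal (real_of_rat r)"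
      using osc_usc[OF x(1) r(1)] by blast
    obtain e where e: "e > 0" "ball x e \<subseteq> V" using V(1,2) open_contains_ball by blast
    obtain n where n: "inverse (real (Suc n)) < e/2" using reals_Archimedean[of "e/2"] e(1) by auto
    have "x \<in> (\<Union>c\<in>C n. ball c (1 / real (Suc n)))" using C x(1) by blast
    then obtain c where c: "c \<in> C n" "dist c x < 1 / real (Suc n)" by auto
    have sub: "ball c (1 / real (Suc n)) \<subseteq> ball x e"
    proof
      fix y assume "y \<in> ball c (1 / real (Suc n))"
      then have "dist c y < 1 / real (Suc n)" by simp
      then have "dist x y < e" using c(2) n dist_triangle[of x y c] by (simp add: dist_commute inverse_eq_divide)
      then show "y \<in> ball x e" by simp
    qed
    have "Q a (r, n, c)"
      unfolding Q_def using c(1) sub e(2) V(3) x(1) r(2) c(2) by (auto simp: dist_commute)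
    then show ?thesis by blast
  qed
  have noq: False if lt: "(a, b) \<in> ord_less" and qa: "Q a t" and qb: "Q b t" for a b t
  proof -
    obtain r n c where t: "t = (r, n, c)" by (cases t) auto
    have af: "a \<in> Field omega1" using lt om_field ol_iff by blast
    obtain x where x: "x \<in> ball c (1 / real (Suc n)) \<inter> K" "ennreal (real_of_rat r) < osc K f (sc a) x"
      using qa unfolding Q_def t by auto
    have "(sc a, b) \<in> omega1" using succ_min[OF sc_succ[OF af] lt] .
    then have "osc K f (sc a) x \<le> osc K f b x" using osc_mono x(1) by blast
    moreover have "osc K f b x < ennreal (real_of_rat r)" using qb x(1) unfolding Q_def t by auto
    ultimately show False using x(2) by simp
  qed
  define code where "code a = (SOME t. Q a t)" for a
  have Qc: "Q a (code a)" if "a \<in> Field omega1" for a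
    unfolding code_def using ex[OF that] by (rule someI_ex)
  have inj: "inj_on code (Field omega1)"
  proof (rule inj_onI)
    fix a b assume a: "a \<in> Field omega1" and b: "b \<in> Field omega1" and eq: "code a = code b"
    show "a = b"
    proof (rule ccontr)
      assume ne: "a \<noteq> b"
      from om_total[OF a b] show False
      proof
        assume "(a,b) \<in> omega1"
        then have "(a,b) \<in> ord_less" using ne ol_iff by blast
        then show False using noq Qc[OF a] Qc[OF b] eq by metis
      next
        assume "(b,a) \<in> omega1"
        then have "(b,a) \<in> ord_less" using ne ol_iff by blast
        then show False using noq Qc[OF a] Qc[OF b] eq by metis
      qed
    qed
  qed
  have "code ` Field omega1 \<subseteq> (UNIV :: rat set) \<times> (UNIV :: nat set) \<times> (\<Union>n. C n)"
  proof
    fix t assume "t \<in> code ` Field omega1"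
    then obtain a where a: "a \<in> Field omega1" "t = code a" by blast
    obtain r n c where t: "t = (r, n, c)" by (cases t) auto
    have "c \<in> C n" using Qc[OF a(1)] unfolding a(2)[symmetric] t Q_def by simp
    then show "t \<in> (UNIV :: rat set) \<times> (UNIV :: nat set) \<times> (\<Union>n. C n)" using t by blast
  qed
  moreover have "countable ((UNIV :: rat set) \<times> (UNIV :: nat set) \<times> (\<Union>n. C n))"
  proof -
    have c1: "countable (\<Union>n. C n)" using C by (intro countable_UN) (auto intro: countable_finite)
    have c2: "countable ((UNIV :: nat set) \<times> (\<Union>n. C n))" by (rule countable_SIGMA, simp, rule c1)
    show ?thesis by (rule countable_SIGMA, simp, rule c2)
  qed
  ultimately have "countable (code ` Field omega1)" by (rule countable_subset)
  then have "countable (Field omega1)" using inj by (rule countable_image_inj_on)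
  then show False using om_uncountable by blast
qed


lemma enn_sum_bound:
  assumes "\<And>j. norm (\<phi> j) \<le> c j" "\<And>j. 0 \<le> c j" "c sums s"
  shows "(\<Sum>j. ennreal (norm (\<phi> j))) \<le> ennreal s"
proof -
  have "(\<Sum>j. ennreal (norm (\<phi> j))) \<le> (\<Sum>j. ennreal (c j))"
    using assms(1) by (intro suminf_le summableI ennreal_leI) auto
  also have "\<dots> = ennreal s" by (rule suminf_ennreal_eq[OF assms(2,3)])
  finally show ?thesis .
qed

locale stab_ctx =
  fixes K :: "'a::metric_space set" and f :: "'a \<Rightarrow> complex" and \<alpha> \<beta> :: "nat set"
  assumes succ: "is_succ_ord \<alpha> \<beta>"
    and eq: "\<forall>x\<in>K. osc K f \<alpha> x = osc K f \<beta> x"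
    and fin: "(SUP x\<in>K. ennreal (norm (f x)) + osc K f \<alpha> x) < \<infinity>"
begin

definition "Lam = (SUP x\<in>K. ennreal (norm (f x)) + osc K f \<alpha> x)"
definition "L = enn2real Lam"
definition "Om x = enn2real (osc K f \<alpha> x)"

lemma Lam_fin: "Lam < top" using fin unfolding Lam_def infinity_ennreal_def .

lemma Lam_eq: "Lam = ennreal L"
  unfolding L_def using Lam_fin by (cases Lam) auto

lemma L_nn: "0 \<le> L" unfolding L_def by simp

lemma le_Lam: "x \<in> K \<Longrightarrow> ennreal (norm (f x)) + osc K f \<alpha> x \<le> Lam"
  unfolding Lam_def by (rule SUP_upper)

lemma osc_fin: "x \<in> K \<Longrightarrow> osc K f \<alpha> x = ennreal (Om x)"
proof -
  assume x: "x \<in> K"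
  have "osc K f \<alpha> x \<le> ennreal (norm (f x)) + osc K f \<alpha> x" by (rule add_increasing) auto
  then have "osc K f \<alpha> x \<le> Lam" using le_Lam[OF x] by (rule order_trans)
  then have "osc K f \<alpha> x < top" using Lam_fin by (rule le_less_trans)
  then show ?thesis unfolding Om_def by (cases "osc K f \<alpha> x") auto
qed

lemma Om_nn: "0 \<le> Om x" unfolding Om_def by simp

lemma fO_le: "x \<in> K \<Longrightarrow> norm (f x) + Om x \<le> L"
proof -
  assume x: "x \<in> K"
  have "ennreal (norm (f x) + Om x) = ennreal (norm (f x)) + osc K f \<alpha> x"
    using osc_fin[OF x] Om_nn by simp
  also have "\<dots> \<le> ennreal L" using le_Lam[OF x] Lam_eq by simp
  finally show ?thesis using L_nn ennreal_le_iff by blast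
qed

lemma key_lsc:
  assumes x: "x \<in> K" and e: "e > 0"
  shows "\<exists>d>0. \<forall>y\<in>K. dist y x < d \<longrightarrow> norm (f y - f x) + Om y < Om x + e"
proof -
  let ?h = "\<lambda>y. ennreal (norm (f y - f x)) + osc K f \<alpha> y"
  have "lsup K ?h x \<le> lsup K (\<lambda>x. lsup K (\<lambda>y. ennreal (norm (f y - f x)) + osc K f \<alpha> y) x) x"
    by (rule lsup_ge[OF x])
  also have "\<dots> = osc K f \<beta> x" using osc_succ[OF succ, of K f] by simp
  also have "\<dots> = ennreal (Om x)" using eq x osc_fin[OF x] by simp
  also have "\<dots> < ennreal (Om x + e)" using e Om_nn by (simp add: ennreal_less_iff)
  finally have "lsup K ?h x < ennreal (Om x + e)" .
  then obtain V where V: "V \<in> {V. open V \<and> x \<in> V}" "(SUP y\<in>V \<inter> K. ?h y) < ennreal (Om x + e)"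
    unfolding lsup_def INF_less_iff by blast
  obtain d where d: "d > 0" "ball x d \<subseteq> V" using V(1) open_contains_ball by blast
  have "norm (f y - f x) + Om y < Om x + e" if y: "y \<in> K" "dist y x < d" for y
  proof -
    have "y \<in> V \<inter> K" using d(2) y by (auto simp: dist_commute)
    then have "?h y \<le> (SUP y\<in>V \<inter> K. ?h y)" by (rule SUP_upper)
    then have "?h y < ennreal (Om x + e)" using V(2) by (rule le_less_trans)
    then have "ennreal (norm (f y - f x) + Om y) < ennreal (Om x + e)"
      using osc_fin[OF y(1)] Om_nn by simp
    then show ?thesis using ennreal_less_iff[of "norm (f y - f x) + Om y"] Om_nn by simp
  qed
  then show ?thesis using d(1) by blast
qed

lemma w_lsc:
  fixes g :: "'a \<Rightarrow> real"
  assumes gl: "\<And>x y. x \<in> K \<Longrightarrow> y \<in> K \<Longrightarrow> \<bar>g y - g x\<bar> \<le> norm (f y - f x)"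
    and x: "x \<in> K" and e: "e > 0"
  shows "\<exists>d>0. \<forall>y\<in>K. dist y x < d \<longrightarrow> (L - Om x + g x) / 2 - e < (L - Om y + g y) / 2"
proof -
  obtain d where d: "d > 0" "\<forall>y\<in>K. dist y x < d \<longrightarrow> norm (f y - f x) + Om y < Om x + e"
    using key_lsc[OF x e] by blast
  have "(L - Om x + g x) / 2 - e < (L - Om y + g y) / 2" if y: "y \<in> K" "dist y x < d" for y
  proof -
    have "norm (f y - f x) + Om y < Om x + e" using d(2) y by blast
    moreover have "g x - g y \<le> norm (f y - f x)" using gl[OF x y(1)] by linarith
    ultimately have "L - Om x + g x - 2 * e < L - Om y + g y" using e by linarith
    then show ?thesis by (simp add: field_simps)
  qed
  then show ?thesis using d(1) by blast
qed

lemma lsc_of: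
  fixes w :: "'a \<Rightarrow> real"
  assumes "\<And>x e. x \<in> K \<Longrightarrow> e > 0 \<Longrightarrow> \<exists>d>0. \<forall>y\<in>K. dist y x < d \<longrightarrow> w x - e < w y"
  shows "lsc_on K w"
  unfolding lsc_on_def
proof
  fix t
  show "openin (top_of_set K) {x \<in> K. t < w x}"
    unfolding openin_euclidean_subtopology_iff
  proof (intro conjI ballI)
    show "{x \<in> K. t < w x} \<subseteq> K" by blast
    fix x assume x: "x \<in> {x \<in> K. t < w x}"
    then have xK: "x \<in> K" and e: "w x - t > 0" by auto
    obtain d where d: "d > 0" "\<forall>y\<in>K. dist y x < d \<longrightarrow> w x - (w x - t) < w y"
      using assms[OF xK e] by blast
    show "\<exists>e>0. \<forall>x'\<in>K. dist x' x < e \<longrightarrow> x' \<in> {x \<in> K. t < w x}"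
      using d by (intro exI[of _ d]) auto
  qed
qed

lemma decomp:
  fixes g :: "'a \<Rightarrow> real"
  assumes gb: "\<And>x. x \<in> K \<Longrightarrow> \<bar>g x\<bar> \<le> norm (f x)"
    and gl: "\<And>x y. x \<in> K \<Longrightarrow> y \<in> K \<Longrightarrow> \<bar>g y - g x\<bar> \<le> norm (f y - f x)"
  shows "\<exists>\<psi>. (\<forall>n. continuous_on K (\<psi> n)) \<and> (\<forall>n. \<forall>x\<in>K. 0 \<le> \<psi> n x) \<and>
     (\<forall>x\<in>K. (\<lambda>n. \<psi> n x) sums ((L - Om x + g x) / 2))"
proof (rule lsc_series)
  fix x assume x: "x \<in> K"
  have "0 \<le> L - Om x + g x" using fO_le[OF x] gb[OF x] abs_ge_minus_self[of "g x"] by linarith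
  then show "0 \<le> (L - Om x + g x) / 2" by simp
  have "L - Om x + g x \<le> 2 * L" using fO_le[OF x] gb[OF x] Om_nn[of x] abs_ge_self[of "g x"] by linarith
  then show "(L - Om x + g x) / 2 \<le> L" by simp
  fix e :: real assume e: "e > 0"
  show "\<exists>d>0. \<forall>y\<in>K. dist y x < d \<longrightarrow> (L - Om x + g x) / 2 - e < (L - Om y + g y) / 2"
    by (rule w_lsc[OF gl x e])
qed

lemma decomp_pair:
  fixes g :: "'a \<Rightarrow> real"
  assumes gb: "\<And>x. x \<in> K \<Longrightarrow> \<bar>g x\<bar> \<le> norm (f x)"
    and gl: "\<And>x y. x \<in> K \<Longrightarrow> y \<in> K \<Longrightarrow> \<bar>g y - g x\<bar> \<le> norm (f y - f x)"
  shows "\<exists>p q. (\<forall>n. continuous_on K (p n)) \<and> (\<forall>n. continuous_on K (q n)) \<and>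
     (\<forall>n. \<forall>x\<in>K. 0 \<le> p n x \<and> 0 \<le> q n x) \<and>
     (\<forall>x\<in>K. (\<lambda>n. p n x) sums ((L - Om x + g x) / 2) \<and> (\<lambda>n. q n x) sums ((L - Om x - g x) / 2))"
proof -
  obtain p where p: "\<forall>n. continuous_on K (p n)" "\<forall>n. \<forall>x\<in>K. 0 \<le> p n x"
     "\<forall>x\<in>K. (\<lambda>n. p n x) sums ((L - Om x + g x) / 2)"
    using decomp[OF gb gl] by blast
  have gb': "\<And>x. x \<in> K \<Longrightarrow> \<bar>- g x\<bar> \<le> norm (f x)" using gb by simp
  have gl': "\<And>x y. x \<in> K \<Longrightarrow> y \<in> K \<Longrightarrow> \<bar>- g y - - g x\<bar> \<le> norm (f y - f x)"
    using gl by (simp add: abs_minus_commute)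
  obtain q where q: "\<forall>n. continuous_on K (q n)" "\<forall>n. \<forall>x\<in>K. 0 \<le> q n x"
     "\<forall>x\<in>K. (\<lambda>n. q n x) sums ((L - Om x + - g x) / 2)"
    using decomp[OF gb' gl'] by blast
  show ?thesis using p q by (intro exI[of _ p] exI[of _ q]) auto
qed

lemma Re_b: "\<bar>Re (f x)\<bar> \<le> norm (f x)" by (rule abs_Re_le_cmod)
lemma Re_l: "\<bar>Re (f y) - Re (f x)\<bar> \<le> norm (f y - f x)" using abs_Re_le_cmod[of "f y - f x"] by simp
lemma Im_b: "\<bar>Im (f x)\<bar> \<le> norm (f x)" by (rule abs_Im_le_cmod)
lemma Im_l: "\<bar>Im (f y) - Im (f x)\<bar> \<le> norm (f y - f x)" using abs_Im_le_cmod[of "f y - f x"] by simp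

lemma in_D_cons: "in_D K f"
proof -
  obtain p1 q1 where pq1: "\<forall>n. continuous_on K (p1 n)" "\<forall>n. continuous_on K (q1 n)"
     "\<forall>n. \<forall>x\<in>K. 0 \<le> p1 n x \<and> 0 \<le> q1 n x"
     "\<forall>x\<in>K. (\<lambda>n. p1 n x) sums ((L - Om x + Re (f x)) / 2) \<and> (\<lambda>n. q1 n x) sums ((L - Om x - Re (f x)) / 2)"
    using decomp_pair[of "\<lambda>x. Re (f x)", OF Re_b Re_l] by blast
  obtain p2 q2 where pq2: "\<forall>n. continuous_on K (p2 n)" "\<forall>n. continuous_on K (q2 n)"
     "\<forall>n. \<forall>x\<in>K. 0 \<le> p2 n x \<and> 0 \<le> q2 n x"
     "\<forall>x\<in>K. (\<lambda>n. p2 n x) sums ((L - Om x + Im (f x)) / 2) \<and> (\<lambda>n. q2 n x) sums ((L - Om x - Im (f x)) / 2)"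
    using decomp_pair[of "\<lambda>x. Im (f x)", OF Im_b Im_l] by blast
  define \<phi> where "\<phi> n x = complex_of_real (p1 n x - q1 n x) + \<i> * complex_of_real (p2 n x - q2 n x)" for n x
  have rep: "D_rep K f \<phi>"
    unfolding D_rep_def
  proof (intro conjI allI ballI)
    fix j show "continuous_on K (\<phi> j)"
      unfolding \<phi>_def[abs_def] using pq1(1,2) pq2(1,2) by (intro continuous_intros) auto
  next
    fix x assume x: "x \<in> K"
    have "(\<lambda>n. p1 n x - q1 n x) sums ((L - Om x + Re (f x)) / 2 - (L - Om x - Re (f x)) / 2)"
      using pq1(4) x by (intro sums_diff) auto
    then have s1: "(\<lambda>n. p1 n x - q1 n x) sums Re (f x)" by (simp add: field_simps)
    have "(\<lambda>n. p2 n x - q2 n x) sums ((L - Om x + Im (f x)) / 2 - (L - Om x - Im (f x)) / 2)"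
      using pq2(4) x by (intro sums_diff) auto
    then have s2: "(\<lambda>n. p2 n x - q2 n x) sums Im (f x)" by (simp add: field_simps)
    have "(\<lambda>n. \<phi> n x) sums (complex_of_real (Re (f x)) + \<i> * complex_of_real (Im (f x)))"
      unfolding \<phi>_def by (intro sums_add sums_mult sums_of_real s1 s2)
    then show "(\<lambda>n. \<phi> n x) sums f x" using complex_eq[of "f x"] by simp
  next
    have b: "(\<Sum>j. ennreal (norm (\<phi> j x))) \<le> ennreal (2 * L)" if x: "x \<in> K" for x
    proof -
      let ?c = "\<lambda>j. p1 j x + q1 j x + p2 j x + q2 j x"
      have s: "?c sums ((L - Om x + Re (f x)) / 2 + (L - Om x - Re (f x)) / 2 + (L - Om x + Im (f x)) / 2 + (L - Om x - Im (f x)) / 2)"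
        using pq1(4) pq2(4) x by (intro sums_add) auto
      have "(\<Sum>j. ennreal (norm (\<phi> j x))) \<le> ennreal ((L - Om x + Re (f x)) / 2 + (L - Om x - Re (f x)) / 2 + (L - Om x + Im (f x)) / 2 + (L - Om x - Im (f x)) / 2)"
      proof (rule enn_sum_bound[OF _ _ s])
        fix j
        have n1: "norm (\<phi> j x) \<le> norm (complex_of_real (p1 j x - q1 j x)) + norm (\<i> * complex_of_real (p2 j x - q2 j x))"
          unfolding \<phi>_def by (rule norm_triangle_ineq)
        have "norm (\<i> * complex_of_real (p2 j x - q2 j x)) = \<bar>p2 j x - q2 j x\<bar>" unfolding norm_mult by (simp del: of_real_diff)
        moreover have "norm (complex_of_real (p1 j x - q1 j x)) = \<bar>p1 j x - q1 j x\<bar>" by (simp del: of_real_diff)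
        moreover have "\<bar>p1 j x - q1 j x\<bar> \<le> p1 j x + q1 j x" using pq1(3) x by (auto simp: abs_if)
        moreover have "\<bar>p2 j x - q2 j x\<bar> \<le> p2 j x + q2 j x" using pq2(3) x by (auto simp: abs_if)
        ultimately show "norm (\<phi> j x) \<le> ?c j" using n1 by linarith
        show "0 \<le> ?c j" using pq1(3) pq2(3) x by fastforce
      qed
      also have "\<dots> = ennreal (2 * (L - Om x))" by (rule arg_cong[where f=ennreal]) (simp add: field_simps)
      also have "\<dots> \<le> ennreal (2 * L)" using Om_nn[of x] by (intro ennreal_leI) simp
      finally show ?thesis .
    qed
    have "(SUP x\<in>K. \<Sum>j. ennreal (norm (\<phi> j x))) \<le> ennreal (2 * L)"
      using b by (intro SUP_least) auto
    also have "\<dots> < \<infinity>" by simp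
    finally show "(SUP x\<in>K. \<Sum>j. ennreal (norm (\<phi> j x))) < \<infinity>" .
  qed
  then show ?thesis unfolding in_D_def by blast
qed


lemma real_part:
  assumes real: "\<forall>x\<in>K. Im (f x) = 0"
  shows "(\<forall>x\<in>K. 0 \<le> (L - Om x + Re (f x)) / 2 \<and> 0 \<le> (L - Om x - Re (f x)) / 2)
    \<and> lsc_on K (\<lambda>x. (L - Om x + Re (f x)) / 2) \<and> lsc_on K (\<lambda>x. (L - Om x - Re (f x)) / 2)
    \<and> (\<forall>x\<in>K. f x = complex_of_real ((L - Om x + Re (f x)) / 2 - (L - Om x - Re (f x)) / 2))
    \<and> (\<exists>\<phi>. D_rep K f \<phi> \<and> (SUP x\<in>K. \<Sum>j. ennreal (norm (\<phi> j x)))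
          \<le> (SUP x\<in>K. ennreal \<bar>(L - Om x + Re (f x)) / 2 + (L - Om x - Re (f x)) / 2\<bar>))
    \<and> (SUP x\<in>K. ennreal \<bar>(L - Om x + Re (f x)) / 2 + (L - Om x - Re (f x)) / 2\<bar>) \<le> Lam"
proof (intro conjI ballI)
  fix x assume x: "x \<in> K"
  have "0 \<le> L - Om x + Re (f x)" using fO_le[OF x] Re_b[of x] abs_ge_minus_self[of "Re (f x)"] by linarith
  then show "0 \<le> (L - Om x + Re (f x)) / 2" by simp
  have "0 \<le> L - Om x - Re (f x)" using fO_le[OF x] Re_b[of x] abs_ge_self[of "Re (f x)"] by linarith
  then show "0 \<le> (L - Om x - Re (f x)) / 2" by simp
next
  show "lsc_on K (\<lambda>x. (L - Om x + Re (f x)) / 2)"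
    by (rule lsc_of) (rule w_lsc[OF Re_l])
next
  have gl': "\<bar>- Re (f y) - - Re (f x)\<bar> \<le> norm (f y - f x)" if "x \<in> K" "y \<in> K" for x y
  proof -
    have "\<bar>- Re (f y) - - Re (f x)\<bar> = \<bar>Re (f y) - Re (f x)\<bar>" by linarith
    then show ?thesis using Re_l[of y x] by simp
  qed
  have "lsc_on K (\<lambda>x. (L - Om x + - Re (f x)) / 2)"
    by (rule lsc_of) (rule w_lsc[OF gl'])
  then show "lsc_on K (\<lambda>x. (L - Om x - Re (f x)) / 2)" by simp
next
  fix x assume x: "x \<in> K"
  have "(L - Om x + Re (f x)) / 2 - (L - Om x - Re (f x)) / 2 = Re (f x)" by (simp add: field_simps)
  then show "f x = complex_of_real ((L - Om x + Re (f x)) / 2 - (L - Om x - Re (f x)) / 2)"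
    using real x by (simp add: complex_eq_iff)
next
  obtain p1 q1 where pq1: "\<forall>n. continuous_on K (p1 n)" "\<forall>n. continuous_on K (q1 n)"
     "\<forall>n. \<forall>x\<in>K. 0 \<le> p1 n x \<and> 0 \<le> q1 n x"
     "\<forall>x\<in>K. (\<lambda>n. p1 n x) sums ((L - Om x + Re (f x)) / 2) \<and> (\<lambda>n. q1 n x) sums ((L - Om x - Re (f x)) / 2)"
    using decomp_pair[of "\<lambda>x. Re (f x)", OF Re_b Re_l] by blast
  define \<phi> where "\<phi> n x = complex_of_real (p1 n x - q1 n x)" for n x
  have b: "(\<Sum>j. ennreal (norm (\<phi> j x))) \<le> ennreal \<bar>(L - Om x + Re (f x)) / 2 + (L - Om x - Re (f x)) / 2\<bar>"
    if x: "x \<in> K" for x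
  proof -
    let ?c = "\<lambda>j. p1 j x + q1 j x"
    have s: "?c sums ((L - Om x + Re (f x)) / 2 + (L - Om x - Re (f x)) / 2)"
      using pq1(4) x by (intro sums_add) auto
    have "(\<Sum>j. ennreal (norm (\<phi> j x))) \<le> ennreal ((L - Om x + Re (f x)) / 2 + (L - Om x - Re (f x)) / 2)"
    proof (rule enn_sum_bound[OF _ _ s])
      fix j
      have "norm (\<phi> j x) = \<bar>p1 j x - q1 j x\<bar>" unfolding \<phi>_def by (simp del: of_real_diff)
      moreover have "\<bar>p1 j x - q1 j x\<bar> \<le> p1 j x + q1 j x" using pq1(3) x by (auto simp: abs_if)
      ultimately show "norm (\<phi> j x) \<le> ?c j" by linarith
      show "0 \<le> ?c j" using pq1(3) x by fastforce
    qed
    also have "\<dots> \<le> ennreal \<bar>(L - Om x + Re (f x)) / 2 + (L - Om x - Re (f x)) / 2\<bar>"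
      by (intro ennreal_leI) simp
    finally show ?thesis .
  qed
  have rep: "D_rep K f \<phi>"
    unfolding D_rep_def
  proof (intro conjI allI ballI)
    fix j show "continuous_on K (\<phi> j)"
      unfolding \<phi>_def[abs_def] using pq1(1,2) by (intro continuous_intros) auto
  next
    fix x assume x: "x \<in> K"
    have "(\<lambda>n. p1 n x - q1 n x) sums ((L - Om x + Re (f x)) / 2 - (L - Om x - Re (f x)) / 2)"
      using pq1(4) x by (intro sums_diff) auto
    then have s1: "(\<lambda>n. p1 n x - q1 n x) sums Re (f x)" by (simp add: field_simps)
    have "(\<lambda>n. \<phi> n x) sums (complex_of_real (Re (f x)))"
      unfolding \<phi>_def by (intro sums_of_real s1)
    moreover have "complex_of_real (Re (f x)) = f x" using real x by (simp add: complex_eq_iff)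
    ultimately show "(\<lambda>n. \<phi> n x) sums f x" by simp
  next
    have "(SUP x\<in>K. \<Sum>j. ennreal (norm (\<phi> j x))) \<le> ennreal (2 * L)"
    proof (rule SUP_least)
      fix x assume x: "x \<in> K"
      have "(\<Sum>j. ennreal (norm (\<phi> j x))) \<le> ennreal \<bar>(L - Om x + Re (f x)) / 2 + (L - Om x - Re (f x)) / 2\<bar>"
        by (rule b[OF x])
      also have "\<dots> \<le> ennreal (2 * L)" 
      proof (rule ennreal_leI)
        have e: "(L - Om x + Re (f x)) / 2 + (L - Om x - Re (f x)) / 2 = L - Om x" by (simp add: field_simps)
        have "0 \<le> L - Om x" using fO_le[OF x] norm_ge_zero[of "f x"] by linarith
        then show "\<bar>(L - Om x + Re (f x)) / 2 + (L - Om x - Re (f x)) / 2\<bar> \<le> 2 * L"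
          unfolding e using Om_nn[of x] L_nn by simp
      qed
      finally show "(\<Sum>j. ennreal (norm (\<phi> j x))) \<le> ennreal (2 * L)" .
    qed
    also have "\<dots> < \<infinity>" by simp
    finally show "(SUP x\<in>K. \<Sum>j. ennreal (norm (\<phi> j x))) < \<infinity>" .
  qed
  have "(SUP x\<in>K. \<Sum>j. ennreal (norm (\<phi> j x))) \<le> (SUP x\<in>K. ennreal \<bar>(L - Om x + Re (f x)) / 2 + (L - Om x - Re (f x)) / 2\<bar>)"
    using b by (intro SUP_mono) auto
  then show "\<exists>\<phi>. D_rep K f \<phi> \<and> (SUP x\<in>K. \<Sum>j. ennreal (norm (\<phi> j x)))
          \<le> (SUP x\<in>K. ennreal \<bar>(L - Om x + Re (f x)) / 2 + (L - Om x - Re (f x)) / 2\<bar>)"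
    using rep by blast
next
  show "(SUP x\<in>K. ennreal \<bar>(L - Om x + Re (f x)) / 2 + (L - Om x - Re (f x)) / 2\<bar>) \<le> Lam"
  proof (rule SUP_least)
    fix x assume x: "x \<in> K"
    have e: "(L - Om x + Re (f x)) / 2 + (L - Om x - Re (f x)) / 2 = L - Om x" by (simp add: field_simps)
    have "0 \<le> L - Om x" using fO_le[OF x] norm_ge_zero[of "f x"] by linarith
    then have "ennreal \<bar>(L - Om x + Re (f x)) / 2 + (L - Om x - Re (f x)) / 2\<bar> \<le> ennreal L"
      unfolding e using Om_nn[of x] by (intro ennreal_leI) simp
    then show "ennreal \<bar>(L - Om x + Re (f x)) / 2 + (L - Om x - Re (f x)) / 2\<bar> \<le> Lam" using Lam_eq by simp
  qed
qed

end


lemma Lam_le_rep: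
  assumes "D_rep K f \<phi>"
  shows "(SUP x\<in>K. ennreal (norm (f x)) + osc K f a x) \<le> (SUP x\<in>K. \<Sum>j. ennreal (norm (\<phi> j x)))"
  using D_bound[OF assms] by (intro SUP_least) auto

lemma rep_fin: "D_rep K f \<phi> \<Longrightarrow> (SUP x\<in>K. \<Sum>j. ennreal (norm (\<phi> j x))) < \<infinity>"
  unfolding D_rep_def by blast

theorem theorem3p1:
  fixes K :: "'a::metric_space set" and f :: "'a \<Rightarrow> complex"
  assumes "compact K"
    and "\<exists>B. \<forall>x\<in>K. norm (f x) \<le> B"
  shows "(in_D K f \<longleftrightarrow> (\<forall>\<alpha>\<in>Field omega1. (SUP x\<in>K. osc K f \<alpha> x) < \<infinity>))
    \<and> (in_D K f \<longrightarrow>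
        (\<exists>\<alpha>\<in>Field omega1. \<exists>\<beta>. is_succ_ord \<alpha> \<beta> \<and> (\<forall>x\<in>K. osc K f \<alpha> x = osc K f \<beta> x) \<and>
          ((\<forall>x\<in>K. Im (f x) = 0) \<longrightarrow>
            (let lam = (SUP x\<in>K. ennreal (norm (f x)) + osc K f \<alpha> x);
                 u = (\<lambda>x. (enn2real lam - enn2real (osc K f \<alpha> x) + Re (f x)) / 2);
                 v = (\<lambda>x. (enn2real lam - enn2real (osc K f \<alpha> x) - Re (f x)) / 2)
             in D_norm K f = lam
                \<and> (\<forall>x\<in>K. 0 \<le> u x \<and> 0 \<le> v x)
                \<and> lsc_on K u \<and> lsc_on K v
                \<and> (\<forall>x\<in>K. f x = complex_of_real (u x - v x))
                \<and> D_norm K f = (SUP x\<in>K. ennreal \<bar>u x + v x\<bar>)))))"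
proof -
  obtain \<alpha> \<beta> where ab: "\<alpha> \<in> Field omega1" "is_succ_ord \<alpha> \<beta>" "\<forall>x\<in>K. osc K f \<alpha> x = osc K f \<beta> x"
    using stabilize[OF assms(1), of f] by blast
  obtain B where B: "\<forall>x\<in>K. norm (f x) \<le> B" using assms(2) by blast
  have A: "in_D K f \<Longrightarrow> (\<forall>\<alpha>\<in>Field omega1. (SUP x\<in>K. osc K f \<alpha> x) < \<infinity>)"
  proof (intro ballI)
    fix a assume "in_D K f"
    then obtain \<phi> where \<phi>: "D_rep K f \<phi>" unfolding in_D_def by blast
    have "(SUP x\<in>K. osc K f a x) \<le> (SUP x\<in>K. \<Sum>j. ennreal (norm (\<phi> j x)))"
    proof (rule SUP_least)
      fix x assume x: "x \<in> K"
      have "osc K f a x \<le> ennreal (norm (f x)) + osc K f a x" by (rule add_increasing) auto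
      also have "\<dots> \<le> (SUP x\<in>K. \<Sum>j. ennreal (norm (\<phi> j x)))" by (rule D_bound[OF \<phi> x])
      finally show "osc K f a x \<le> (SUP x\<in>K. \<Sum>j. ennreal (norm (\<phi> j x)))" .
    qed
    also have "\<dots> < \<infinity>" by (rule rep_fin[OF \<phi>])
    finally show "(SUP x\<in>K. osc K f a x) < \<infinity>" .
  qed
  have Bd: "(\<forall>\<alpha>\<in>Field omega1. (SUP x\<in>K. osc K f \<alpha> x) < \<infinity>) \<Longrightarrow> in_D K f"
  proof -
    assume H: "\<forall>\<alpha>\<in>Field omega1. (SUP x\<in>K. osc K f \<alpha> x) < \<infinity>"
    have "(SUP x\<in>K. ennreal (norm (f x)) + osc K f \<alpha> x) \<le> ennreal B + (SUP x\<in>K. osc K f \<alpha> x)"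
    proof (rule SUP_least)
      fix x assume x: "x \<in> K"
      show "ennreal (norm (f x)) + osc K f \<alpha> x \<le> ennreal B + (SUP x\<in>K. osc K f \<alpha> x)"
        using B x by (intro add_mono ennreal_leI SUP_upper) auto
    qed
    also have "\<dots> < \<infinity>" using H ab(1) by (simp add: infinity_ennreal_def)
    finally have fin: "(SUP x\<in>K. ennreal (norm (f x)) + osc K f \<alpha> x) < \<infinity>" .
    interpret stab_ctx K f \<alpha> \<beta> using ab(2,3) fin by unfold_locales
    show "in_D K f" by (rule in_D_cons)
  qed
  have C: "\<exists>\<alpha>\<in>Field omega1. \<exists>\<beta>. is_succ_ord \<alpha> \<beta> \<and> (\<forall>x\<in>K. osc K f \<alpha> x = osc K f \<beta> x) \<and>
          ((\<forall>x\<in>K. Im (f x) = 0) \<longrightarrow>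
            (let lam = (SUP x\<in>K. ennreal (norm (f x)) + osc K f \<alpha> x);
                 u = (\<lambda>x. (enn2real lam - enn2real (osc K f \<alpha> x) + Re (f x)) / 2);
                 v = (\<lambda>x. (enn2real lam - enn2real (osc K f \<alpha> x) - Re (f x)) / 2)
             in D_norm K f = lam
                \<and> (\<forall>x\<in>K. 0 \<le> u x \<and> 0 \<le> v x)
                \<and> lsc_on K u \<and> lsc_on K v
                \<and> (\<forall>x\<in>K. f x = complex_of_real (u x - v x))
                \<and> D_norm K f = (SUP x\<in>K. ennreal \<bar>u x + v x\<bar>)))"
    if D: "in_D K f"
  proof -
    obtain \<phi>0 where \<phi>0: "D_rep K f \<phi>0" using D unfolding in_D_def by blast
    have fin: "(SUP x\<in>K. ennreal (norm (f x)) + osc K f \<alpha> x) < \<infinity>"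
      using Lam_le_rep[OF \<phi>0, of \<alpha>] rep_fin[OF \<phi>0] by (rule le_less_trans)
    interpret stab_ctx K f \<alpha> \<beta> using ab(2,3) fin by unfold_locales
    have R: "(\<forall>x\<in>K. Im (f x) = 0) \<longrightarrow>
            (let lam = (SUP x\<in>K. ennreal (norm (f x)) + osc K f \<alpha> x);
                 u = (\<lambda>x. (enn2real lam - enn2real (osc K f \<alpha> x) + Re (f x)) / 2);
                 v = (\<lambda>x. (enn2real lam - enn2real (osc K f \<alpha> x) - Re (f x)) / 2)
             in D_norm K f = lam
                \<and> (\<forall>x\<in>K. 0 \<le> u x \<and> 0 \<le> v x)
                \<and> lsc_on K u \<and> lsc_on K v
                \<and> (\<forall>x\<in>K. f x = complex_of_real (u x - v x))
                \<and> D_norm K f = (SUP x\<in>K. ennreal \<bar>u x + v x\<bar>))"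
    proof
      assume real: "\<forall>x\<in>K. Im (f x) = 0"
      note rp = real_part[OF real]
      have lamL: "(SUP x\<in>K. ennreal (norm (f x)) + osc K f \<alpha> x) = Lam" unfolding Lam_def ..
      have uL: "enn2real Lam = L" unfolding L_def ..
      have oO: "enn2real (osc K f \<alpha> x) = Om x" for x unfolding Om_def ..
      obtain \<phi> where \<phi>: "D_rep K f \<phi>" "(SUP x\<in>K. \<Sum>j. ennreal (norm (\<phi> j x)))
          \<le> (SUP x\<in>K. ennreal \<bar>(L - Om x + Re (f x)) / 2 + (L - Om x - Re (f x)) / 2\<bar>)"
        using rp by blast
      have ge: "Lam \<le> D_norm K f"
        unfolding D_norm_def Lam_def
      proof (rule INF_greatest)
        fix \<psi> assume "\<psi> \<in> {\<phi>. D_rep K f \<phi>}"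
        then show "(SUP x\<in>K. ennreal (norm (f x)) + osc K f \<alpha> x) \<le> (SUP x\<in>K. \<Sum>j. ennreal (norm (\<psi> j x)))"
          using Lam_le_rep by blast
      qed
      have le: "D_norm K f \<le> (SUP x\<in>K. ennreal \<bar>(L - Om x + Re (f x)) / 2 + (L - Om x - Re (f x)) / 2\<bar>)"
      proof -
        have "D_norm K f \<le> (SUP x\<in>K. \<Sum>j. ennreal (norm (\<phi> j x)))"
          unfolding D_norm_def using \<phi>(1) by (intro INF_lower) simp
        then show ?thesis using \<phi>(2) by (rule order_trans)
      qed
      have le2: "(SUP x\<in>K. ennreal \<bar>(L - Om x + Re (f x)) / 2 + (L - Om x - Re (f x)) / 2\<bar>) \<le> Lam"
        using rp by blast
      have "D_norm K f \<le> Lam" using le le2 by (rule order_trans)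
      then have e1: "D_norm K f = Lam" using ge by (rule antisym)
      have "(SUP x\<in>K. ennreal \<bar>(L - Om x + Re (f x)) / 2 + (L - Om x - Re (f x)) / 2\<bar>) \<le> D_norm K f"
        using le2 ge by (rule order_trans)
      with le have e2: "D_norm K f = (SUP x\<in>K. ennreal \<bar>(L - Om x + Re (f x)) / 2 + (L - Om x - Re (f x)) / 2\<bar>)"
        by (rule antisym)
      show "let lam = (SUP x\<in>K. ennreal (norm (f x)) + osc K f \<alpha> x);
                 u = (\<lambda>x. (enn2real lam - enn2real (osc K f \<alpha> x) + Re (f x)) / 2);
                 v = (\<lambda>x. (enn2real lam - enn2real (osc K f \<alpha> x) - Re (f x)) / 2)
             in D_norm K f = lam
                \<and> (\<forall>x\<in>K. 0 \<le> u x \<and> 0 \<le> v x)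
                \<and> lsc_on K u \<and> lsc_on K v
                \<and> (\<forall>x\<in>K. f x = complex_of_real (u x - v x))
                \<and> D_norm K f = (SUP x\<in>K. ennreal \<bar>u x + v x\<bar>)"
        unfolding Let_def lamL uL oO using rp e1 e2 by blast
    qed
    show ?thesis using ab R by blast
  qed
  show ?thesis using A Bd C by blast
qed

end
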